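(* Let $X=\{a_1,\dots,a_n\}$ be a finite topological space with furtherness matrix $\Psi(X)$. Then $X$ is $T_0$ if and only if all rows of $\Psi(X)$ are pairwise distinct, and $X$ is $T_0$ if and only if all columns of $\Psi(X)$ are pairwise distinct.
   Context: For a finite topological space $X$ and $x\in X$, $U_x$ denotes the minimal open set containing $x$. A nested sequence of open sets around $x$ is a finite sequence $U_0\subsetneq U_1\subsetneq\cdots\subsetneq U_m=X$ of open sets with $U_0=U_x$ such that for each $j$ there is no open set $V$ with $U_j\subsetneq V\subsetneq U_{j+1}$. The furtherness function $\Psi:X\times X\to\{0,1,\dots,|X|-1\}$ is defined by: $\Psi(x,y)$ is the smallest integer $k\ge 0$ such that there exists a nested sequence $(U_j)_{j\ge0}$ of open sets around $x$ with $y\in U_k$. The furtherness matrix $\Psi(X)$ is the $n\times n$ matrix with $(i,j)$ entry $\Psi(a_i,a_j)$. *)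

theory Defs
  imports "HOL-Analysis.Analysis"
begin

definition minimal_open :: "'a topology \<Rightarrow> 'a \<Rightarrow> 'a set" where
  "minimal_open T x = \<Inter>{U. openin T U \<and> x \<in> U}"

definition nested_seq :: "'a topology \<Rightarrow> 'a \<Rightarrow> (nat \<Rightarrow> 'a set) \<Rightarrow> nat \<Rightarrow> bool" where
  "nested_seq T x U m \<longleftrightarrow>
     U 0 = minimal_open T x \<and> U m = topspace T \<and>
     (\<forall>j\<le>m. openin T (U j)) \<and>
     (\<forall>j<m. U j \<subset> U (Suc j) \<and> \<not> (\<exists>V. openin T V \<and> U j \<subset> V \<and> V \<subset> U (Suc j)))"

definition furtherness :: "'a topology \<Rightarrow> 'a \<Rightarrow> 'a \<Rightarrow> nat" where
  "furtherness T x y = (LEAST k. \<exists>U m. nested_seq T x U m \<and> k \<le> m \<and> y \<in> U k)"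

definition psi_row :: "'a topology \<Rightarrow> (nat \<Rightarrow> 'a) \<Rightarrow> nat \<Rightarrow> nat \<Rightarrow> nat list" where
  "psi_row T a n i = map (\<lambda>j. furtherness T (a i) (a j)) [0..<n]"

definition psi_col :: "'a topology \<Rightarrow> (nat \<Rightarrow> 'a) \<Rightarrow> nat \<Rightarrow> nat \<Rightarrow> nat list" where
  "psi_col T a n j = map (\<lambda>i. furtherness T (a i) (a j)) [0..<n]"

end

theory Submission
  imports Defs
begin

definition chainseq :: "'a topology \<Rightarrow> 'a set \<Rightarrow> (nat \<Rightarrow> 'a set) \<Rightarrow> nat \<Rightarrow> bool" where
  "chainseq T V U m \<longleftrightarrow>
     U 0 = V \<and> U m = topspace T \<and>
     (\<forall>j\<le>m. openin T (U j)) \<and>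
     (\<forall>j<m. U j \<subset> U (Suc j) \<and> \<not> (\<exists>W. openin T W \<and> U j \<subset> W \<and> W \<subset> U (Suc j)))"

lemma chain_exists:
  assumes fin: "finite (topspace T)" and op: "openin T V"
  shows "\<exists>U m. chainseq T V U m"
  using op
proof (induction "card (topspace T - V)" arbitrary: V rule: less_induct)
  case less
  show ?case
  proof (cases "V = topspace T")
    case True
    then show ?thesis using less.prems
      by (intro exI[of _ "\<lambda>_. V"] exI[of _ 0]) (auto simp: chainseq_def)
  next
    case False
    have Vsub: "V \<subset> topspace T" using False openin_subset[OF less.prems] by blast
    let ?P = "\<lambda>W. openin T W \<and> V \<subset> W"
    have "?P (topspace T)" using Vsub by auto
    from ex_has_least_nat[of ?P "topspace T" card, OF this]
    obtain W where W: "?P W" and Wmin: "\<And>W'. ?P W' \<Longrightarrow> card W \<le> card W'" by blast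
    have Wsub: "W \<subseteq> topspace T" using W openin_subset by blast
    have "card (topspace T - W) < card (topspace T - V)"
      using W Wsub fin by (intro psubset_card_mono) auto
    from less.hyps[OF this] W obtain U m where U: "chainseq T W U m" by blast
    have nobetween: "\<not> (\<exists>W'. openin T W' \<and> V \<subset> W' \<and> W' \<subset> W)"
    proof
      assume "\<exists>W'. openin T W' \<and> V \<subset> W' \<and> W' \<subset> W"
      then obtain W' where "openin T W'" "V \<subset> W'" "W' \<subset> W" by blast
      moreover have "finite W" using Wsub fin finite_subset by blast
      ultimately have "card W' < card W" by (simp add: psubset_card_mono)
      with Wmin[of W'] \<open>openin T W'\<close> \<open>V \<subset> W'\<close> show False by fastforce
    qed
    define U' where "U' = (\<lambda>j. case j of 0 \<Rightarrow> V | Suc k \<Rightarrow> U k)"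
    have "chainseq T V U' (Suc m)"
      unfolding chainseq_def
    proof (intro conjI allI impI)
      show "U' 0 = V" by (simp add: U'_def)
      show "U' (Suc m) = topspace T" using U by (simp add: U'_def chainseq_def)
    next
      fix j assume "j \<le> Suc m"
      then show "openin T (U' j)" using U less.prems
        by (cases j) (auto simp: U'_def chainseq_def)
    next
      fix j assume "j < Suc m"
      then show "U' j \<subset> U' (Suc j)" using U W
        by (cases j) (auto simp: U'_def chainseq_def)
    next
      fix j assume "j < Suc m"
      then show "\<not> (\<exists>W'. openin T W' \<and> U' j \<subset> W' \<and> W' \<subset> U' (Suc j))"
        using U nobetween by (cases j) (auto simp: U'_def chainseq_def)
    qed
    then show ?thesis by blast
  qed
qed

lemma mo_props:
  assumes fin: "finite (topspace T)" and x: "x \<in> topspace T"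
  shows "openin T (minimal_open T x)" "x \<in> minimal_open T x"
    "\<And>U. openin T U \<Longrightarrow> x \<in> U \<Longrightarrow> minimal_open T x \<subseteq> U"
proof -
  have "{U. openin T U \<and> x \<in> U} \<subseteq> Pow (topspace T)" using openin_subset by blast
  then have "finite {U. openin T U \<and> x \<in> U}" using fin finite_subset by blast
  moreover have "topspace T \<in> {U. openin T U \<and> x \<in> U}" using x by auto
  ultimately show "openin T (minimal_open T x)" unfolding minimal_open_def
    by (intro openin_Inter) auto
  show "x \<in> minimal_open T x" unfolding minimal_open_def by auto
  show "\<And>U. openin T U \<Longrightarrow> x \<in> U \<Longrightarrow> minimal_open T x \<subseteq> U"
    unfolding minimal_open_def by auto
qed

lemma psi_zero:
  assumes fin: "finite (topspace T)" and x: "x \<in> topspace T" and y: "y \<in> topspace T"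
  shows "furtherness T x y = 0 \<longleftrightarrow> y \<in> minimal_open T x"
proof -
  obtain U m where U: "chainseq T (minimal_open T x) U m"
    using chain_exists[OF fin mo_props(1)[OF fin x]] by blast
  then have ns: "nested_seq T x U m" by (simp add: chainseq_def nested_seq_def)
  show ?thesis
  proof
    assume "y \<in> minimal_open T x"
    then show "furtherness T x y = 0" unfolding furtherness_def
      using ns by (intro Least_eq_0) (auto simp: nested_seq_def intro!: exI[of _ U] exI[of _ m])
  next
    assume a: "furtherness T x y = 0"
    have "\<exists>k U m. nested_seq T x U m \<and> k \<le> m \<and> y \<in> U k"
      using ns y by (intro exI[of _ m] exI[of _ U]) (auto simp: nested_seq_def)
    then have "\<exists>U' m'. nested_seq T x U' m' \<and> (LEAST k. \<exists>U m. nested_seq T x U m \<and> k \<le> m \<and> y \<in> U k) \<le> m' \<and> y \<in> U' (LEAST k. \<exists>U m. nested_seq T x U m \<and> k \<le> m \<and> y \<in> U k)"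
      by (rule LeastI_ex)
    with a show "y \<in> minimal_open T x" unfolding furtherness_def by (auto simp: nested_seq_def)
  qed
qed

theorem mainTheorem14:
  fixes T :: "'a topology" and a :: "nat \<Rightarrow> 'a" and n :: nat
  assumes "finite (topspace T)"
    and "bij_betw a {..<n} (topspace T)"
  shows "(t0_space T \<longleftrightarrow> (\<forall>i<n. \<forall>j<n. i \<noteq> j \<longrightarrow> psi_row T a n i \<noteq> psi_row T a n j))
       \<and> (t0_space T \<longleftrightarrow> (\<forall>i<n. \<forall>j<n. i \<noteq> j \<longrightarrow> psi_col T a n i \<noteq> psi_col T a n j))"
proof -
  note fin = assms(1)
  have inj: "inj_on a {..<n}" and img: "a ` {..<n} = topspace T"
    using assms(2) by (auto simp: bij_betw_def)
  have ain: "\<And>i. i < n \<Longrightarrow> a i \<in> topspace T" using img by auto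
  have key: "\<And>x y. x \<in> topspace T \<Longrightarrow> y \<in> topspace T \<Longrightarrow> openin T U \<Longrightarrow> x \<in> U \<Longrightarrow> y \<notin> U \<Longrightarrow>
      furtherness T x y \<noteq> 0 \<and> furtherness T y y = 0 \<and> furtherness T x x = 0" for U
    using psi_zero[OF fin] mo_props[OF fin] by blast
  have A: "psi_row T a n i \<noteq> psi_row T a n j \<and> psi_col T a n i \<noteq> psi_col T a n j"
    if t0: "t0_space T" and ij: "i < n" "j < n" "i \<noteq> j" for i j
  proof -
    have ne: "a i \<noteq> a j" using inj ij by (meson inj_on_def lessThan_iff)
    obtain U where U: "openin T U" "a i \<notin> U \<longleftrightarrow> a j \<in> U"
      using t0 ne ain[OF ij(1)] ain[OF ij(2)] unfolding t0_space_def by blast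
    show ?thesis
    proof (cases "a i \<in> U")
      case True
      then have "a j \<notin> U" using U by blast
      from key[OF ain[OF ij(1)] ain[OF ij(2)] U(1) True this]
      have k: "furtherness T (a i) (a j) \<noteq> 0" "furtherness T (a j) (a j) = 0"
        "furtherness T (a i) (a i) = 0" by auto
      have r: "psi_row T a n i ! j \<noteq> psi_row T a n j ! j" using k ij by (simp add: psi_row_def)
      have c: "psi_col T a n i ! i \<noteq> psi_col T a n j ! i" using k ij by (simp add: psi_col_def)
      show ?thesis using r c by metis
    next
      case False
      then have "a j \<in> U" using U by blast
      from key[OF ain[OF ij(2)] ain[OF ij(1)] U(1) this False]
      have k: "furtherness T (a j) (a i) \<noteq> 0" "furtherness T (a i) (a i) = 0"
        "furtherness T (a j) (a j) = 0" by auto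
      have r: "psi_row T a n i ! i \<noteq> psi_row T a n j ! i" using k ij by (simp add: psi_row_def)
      have c: "psi_col T a n i ! j \<noteq> psi_col T a n j ! j" using k ij by (simp add: psi_col_def)
      show ?thesis using r c by metis
    qed
  qed
  have B: "\<exists>i<n. \<exists>j<n. i \<noteq> j \<and> psi_row T a n i = psi_row T a n j \<and> psi_col T a n i = psi_col T a n j"
    if nt0: "\<not> t0_space T"
  proof -
    obtain x y where xy: "x \<in> topspace T" "y \<in> topspace T" "x \<noteq> y"
      and same: "\<And>U. openin T U \<Longrightarrow> (x \<in> U \<longleftrightarrow> y \<in> U)"
      using nt0 unfolding t0_space_def by blast
    obtain i j where ij: "i < n" "j < n" "x = a i" "y = a j"
      using xy img by (metis imageE lessThan_iff)
    have ine: "i \<noteq> j" using ij xy by blast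
    have mo: "minimal_open T x = minimal_open T y"
      unfolding minimal_open_def using same by metis
    have f1: "furtherness T x = furtherness T y"
      unfolding furtherness_def nested_seq_def mo by simp
    have f2: "furtherness T z x = furtherness T z y" for z
    proof -
      have s: "nested_seq T z U m \<Longrightarrow> k \<le> m \<Longrightarrow> (x \<in> U k \<longleftrightarrow> y \<in> U k)" for U m k
        using same unfolding nested_seq_def by blast
      have "(\<lambda>k. \<exists>U m. nested_seq T z U m \<and> k \<le> m \<and> x \<in> U k) =
            (\<lambda>k. \<exists>U m. nested_seq T z U m \<and> k \<le> m \<and> y \<in> U k)"
        using s by blast
      then show ?thesis unfolding furtherness_def by simp
    qed
    have "psi_row T a n i = psi_row T a n j" unfolding psi_row_def using f1 ij by simp
    moreover have "psi_col T a n i = psi_col T a n j" unfolding psi_col_def using f2 ij by simp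
    ultimately show ?thesis using ij ine by blast
  qed
  show ?thesis using A B by blast
qed

end
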